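(* Let $N,n\in\mathbb{N}$ and let $\{\mathcal{G}_i\}_{i=1}^n$ be a set of directed regular graphs without loops on the same set of $N$ vertices. Then there exists an undirected graph $\mathcal{G}$ such that $\operatorname{Aut}\mathcal{G}=\bigcap_{i=1}^n\operatorname{Aut}\mathcal{G}_i$.
   Context: A directed graph is regular if every vertex has the same in-degree and out-degree $d$. The intersection is taken inside the permutation group of the common vertex set; the equality is understood as an isomorphism of groups induced by the natural action of common automorphisms on $\mathcal{G}$. *)

theory Defs
  imports "HOL-Combinatorics.Permutations"
begin

definition loopless_digraph :: "'a set \<Rightarrow> ('a \<times> 'a) set \<Rightarrow> bool" where
  "loopless_digraph V A \<longleftrightarrow> A \<subseteq> V \<times> V \<and> (\<forall>v. (v, v) \<notin> A)"

definition regular_digraph :: "'a set \<Rightarrow> ('a \<times> 'a) set \<Rightarrow> bool" where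
  "regular_digraph V A \<longleftrightarrow> (\<exists>d::nat. \<forall>v\<in>V.
      card {u. (v, u) \<in> A} = d \<and> card {u. (u, v) \<in> A} = d)"

definition graph_aut :: "'a set \<Rightarrow> ('a \<times> 'a) set \<Rightarrow> ('a \<Rightarrow> 'a) set" where
  "graph_aut V A = {\<sigma>. \<sigma> permutes V \<and>
      (\<forall>x\<in>V. \<forall>y\<in>V. (x, y) \<in> A \<longleftrightarrow> (\<sigma> x, \<sigma> y) \<in> A)}"

definition undirected_graph :: "'b set \<Rightarrow> ('b \<times> 'b) set \<Rightarrow> bool" where
  "undirected_graph W E \<longleftrightarrow> E \<subseteq> W \<times> W \<and> sym E \<and> (\<forall>v. (v, v) \<notin> E)"

definition common_aut :: "'a set \<Rightarrow> nat \<Rightarrow> (nat \<Rightarrow> ('a \<times> 'a) set) \<Rightarrow> ('a \<Rightarrow> 'a) set" where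
  "common_aut V n A = {\<sigma>. \<sigma> permutes V \<and> (\<forall>i\<in>{1..n}. \<sigma> \<in> graph_aut V (A i))}"

definition restrict_Inl :: "'a set \<Rightarrow> ('a + 'c \<Rightarrow> 'a + 'c) \<Rightarrow> 'a \<Rightarrow> 'a" where
  "restrict_Inl V \<tau> = (\<lambda>v. if v \<in> V then projl (\<tau> (Inl v)) else v)"

end

theory Submission
  imports Defs "HOL-Library.Nat_Bijection"
begin

locale cons =
  fixes V :: "'a set" and n :: nat and A :: "nat \<Rightarrow> ('a \<times> 'a) set" and f :: "'a \<Rightarrow> nat"
  assumes fin: "finite V" and injf: "inj_on f V"
begin

definition LL :: nat where "LL = 2*n+6"
definition pv :: "nat \<Rightarrow> 'a + nat" where "pv k = Inr (prod_encode (0,k))"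
definition uv :: "'a \<Rightarrow> 'a \<Rightarrow> 'a + nat" where "uv x y = Inr (prod_encode (1, prod_encode (f x, f y)))"
definition wv :: "'a \<Rightarrow> 'a \<Rightarrow> 'a + nat" where "wv x y = Inr (prod_encode (2, prod_encode (f x, f y)))"

lemma pv_inj[simp]: "pv j = pv k \<longleftrightarrow> j = k" by (simp add: pv_def)
lemma uv_inj[simp]: "x\<in>V \<Longrightarrow> y\<in>V \<Longrightarrow> x'\<in>V \<Longrightarrow> y'\<in>V \<Longrightarrow> uv x y = uv x' y' \<longleftrightarrow> x=x' \<and> y=y'"
  using injf by (auto simp: uv_def inj_on_eq_iff)
lemma wv_inj[simp]: "x\<in>V \<Longrightarrow> y\<in>V \<Longrightarrow> x'\<in>V \<Longrightarrow> y'\<in>V \<Longrightarrow> wv x y = wv x' y' \<longleftrightarrow> x=x' \<and> y=y'"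
  using injf by (auto simp: wv_def inj_on_eq_iff)
lemma dist[simp]: "pv k \<noteq> uv x y" "uv x y \<noteq> pv k" "pv k \<noteq> wv x y" "wv x y \<noteq> pv k"
  "uv a b \<noteq> wv x y" "wv x y \<noteq> uv a b" "Inl z \<noteq> pv k" "pv k \<noteq> Inl z"
  "Inl z \<noteq> uv x y" "uv x y \<noteq> Inl z" "Inl z \<noteq> wv x y" "wv x y \<noteq> Inl z"
  by (auto simp: pv_def uv_def wv_def)

definition Wset where "Wset = Inl ` V \<union> pv ` {..LL} \<union> (\<lambda>(x,y). uv x y) ` (V\<times>V) \<union> (\<lambda>(x,y). wv x y) ` (V\<times>V)"

definition Fb where "Fb = (\<lambda>k. (pv k, pv (Suc k))) ` {..<LL} \<union> (\<lambda>x. (pv LL, Inl x)) ` V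
  \<union> (\<lambda>(x,y). (Inl x, uv x y)) ` (V\<times>V) \<union> (\<lambda>(x,y). (Inl y, wv x y)) ` (V\<times>V)
  \<union> (\<lambda>(x,y). (uv x y, wv x y)) ` (V\<times>V) \<union> (\<lambda>(x,y). (pv (2*n+2), uv x y)) ` (V\<times>V)
  \<union> (\<lambda>(x,y). (pv (2*n+4), wv x y)) ` (V\<times>V)
  \<union> {(pv (2*i), uv x y) | i x y. i\<in>{1..n} \<and> x\<in>V \<and> y\<in>V \<and> (x,y) \<in> A i}"

definition EE where "EE = Fb \<union> Fb\<inverse>"

lemma symE: "(a,b) \<in> EE \<longleftrightarrow> (b,a) \<in> EE" by (auto simp: EE_def)

lemma E_ll: "(Inl x, Inl y) \<notin> EE" by (auto simp: EE_def Fb_def)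
lemma E_lu: "x\<in>V \<Longrightarrow> a\<in>V \<Longrightarrow> b\<in>V \<Longrightarrow> (Inl x, uv a b) \<in> EE \<longleftrightarrow> x = a"
  by (auto simp: EE_def Fb_def)
lemma E_lw: "x\<in>V \<Longrightarrow> a\<in>V \<Longrightarrow> b\<in>V \<Longrightarrow> (Inl x, wv a b) \<in> EE \<longleftrightarrow> x = b"
  by (auto simp: EE_def Fb_def)
lemma E_lp: "x\<in>V \<Longrightarrow> (Inl x, pv k) \<in> EE \<longleftrightarrow> k = LL"
  by (auto simp: EE_def Fb_def)
lemma E_uu: "a\<in>V \<Longrightarrow> b\<in>V \<Longrightarrow> c\<in>V \<Longrightarrow> d\<in>V \<Longrightarrow> (uv a b, uv c d) \<notin> EE"
  by (auto simp: EE_def Fb_def)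
lemma E_uw: "a\<in>V \<Longrightarrow> b\<in>V \<Longrightarrow> c\<in>V \<Longrightarrow> d\<in>V \<Longrightarrow> (uv a b, wv c d) \<in> EE \<longleftrightarrow> a = c \<and> b = d"
  by (auto simp: EE_def Fb_def)
lemma E_up: "a\<in>V \<Longrightarrow> b\<in>V \<Longrightarrow> (uv a b, pv k) \<in> EE \<longleftrightarrow> k = 2*n+2 \<or> (\<exists>i\<in>{1..n}. k = 2*i \<and> (a,b) \<in> A i)"
  by (auto simp: EE_def Fb_def)
lemma E_ww: "a\<in>V \<Longrightarrow> b\<in>V \<Longrightarrow> c\<in>V \<Longrightarrow> d\<in>V \<Longrightarrow> (wv a b, wv c d) \<notin> EE"
  by (auto simp: EE_def Fb_def)
lemma E_wp: "a\<in>V \<Longrightarrow> b\<in>V \<Longrightarrow> (wv a b, pv k) \<in> EE \<longleftrightarrow> k = 2*n+4"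
  by (auto simp: EE_def Fb_def)
lemma E_pp: "(pv j, pv k) \<in> EE \<longleftrightarrow> (k = Suc j \<and> j < LL) \<or> (j = Suc k \<and> k < LL)"
  by (auto simp: EE_def Fb_def)

lemmas E_base = E_ll E_lu E_lw E_lp E_uu E_uw E_up E_ww E_wp E_pp

lemma E_ul: "x\<in>V \<Longrightarrow> a\<in>V \<Longrightarrow> b\<in>V \<Longrightarrow> (uv a b, Inl x) \<in> EE \<longleftrightarrow> x = a"
  using E_lu symE by blast
lemma E_wl: "x\<in>V \<Longrightarrow> a\<in>V \<Longrightarrow> b\<in>V \<Longrightarrow> (wv a b, Inl x) \<in> EE \<longleftrightarrow> x = b"
  using E_lw symE by blast
lemma E_pl: "x\<in>V \<Longrightarrow> (pv k, Inl x) \<in> EE \<longleftrightarrow> k = LL"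
  using E_lp symE by blast
lemma E_wu: "a\<in>V \<Longrightarrow> b\<in>V \<Longrightarrow> c\<in>V \<Longrightarrow> d\<in>V \<Longrightarrow> (wv c d, uv a b) \<in> EE \<longleftrightarrow> a = c \<and> b = d"
  using E_uw symE by blast
lemma E_pu: "a\<in>V \<Longrightarrow> b\<in>V \<Longrightarrow> (pv k, uv a b) \<in> EE \<longleftrightarrow> k = 2*n+2 \<or> (\<exists>i\<in>{1..n}. k = 2*i \<and> (a,b) \<in> A i)"
  using E_up symE by blast
lemma E_pw: "a\<in>V \<Longrightarrow> b\<in>V \<Longrightarrow> (pv k, wv a b) \<in> EE \<longleftrightarrow> k = 2*n+4"
  using E_wp symE by blast

lemmas E_simps = E_base E_ul E_wl E_pl E_wu E_pu E_pw

lemma finW: "finite Wset" using fin by (simp add: Wset_def)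

lemma E_sub: "EE \<subseteq> Wset \<times> Wset"
  by (auto simp: EE_def Fb_def Wset_def LL_def)

lemma E_irr: "(v,v) \<notin> EE"
  by (auto simp: EE_def Fb_def)

lemma W_cases:
  assumes "w \<in> Wset"
  obtains (l) x where "x \<in> V" "w = Inl x"
  | (p) k where "k \<le> LL" "w = pv k"
  | (u) x y where "x \<in> V" "y \<in> V" "w = uv x y"
  | (w) x y where "x \<in> V" "y \<in> V" "w = wv x y"
  using assms by (auto simp: Wset_def)

lemma W_mem[simp]: "x \<in> V \<Longrightarrow> Inl x \<in> Wset" "k \<le> LL \<Longrightarrow> pv k \<in> Wset"
  "x \<in> V \<Longrightarrow> y \<in> V \<Longrightarrow> uv x y \<in> Wset" "x \<in> V \<Longrightarrow> y \<in> V \<Longrightarrow> wv x y \<in> Wset"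
  by (auto simp: Wset_def)

definition nb where "nb v = {w. (v,w) \<in> EE}"

lemma nb_sub: "nb v \<subseteq> Wset" using E_sub by (auto simp: nb_def)
lemma nb_fin: "finite (nb v)" using nb_sub finW finite_subset by blast

lemma card3: "a \<in> nb v \<Longrightarrow> b \<in> nb v \<Longrightarrow> c \<in> nb v \<Longrightarrow> a \<noteq> b \<Longrightarrow> a \<noteq> c \<Longrightarrow> b \<noteq> c \<Longrightarrow> card (nb v) \<ge> 3"
proof -
  assume h: "a \<in> nb v" "b \<in> nb v" "c \<in> nb v" "a \<noteq> b" "a \<noteq> c" "b \<noteq> c"
  have "{a,b,c} \<subseteq> nb v" using h by auto
  hence "card {a,b,c} \<le> card (nb v)" using nb_fin card_mono by blast
  thus ?thesis using h by simp
qed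

lemma card2: "a \<in> nb v \<Longrightarrow> b \<in> nb v \<Longrightarrow> a \<noteq> b \<Longrightarrow> card (nb v) \<ge> 2"
proof -
  assume h: "a \<in> nb v" "b \<in> nb v" "a \<noteq> b"
  have "{a,b} \<subseteq> nb v" using h by auto
  hence "card {a,b} \<le> card (nb v)" using nb_fin card_mono by blast
  thus ?thesis using h by simp
qed

lemma deg_l: "x \<in> V \<Longrightarrow> card (nb (Inl x)) \<ge> 3"
  by (rule card3[of "pv LL" _ "uv x x" "wv x x"]) (auto simp: nb_def E_simps)
lemma deg_u: "x \<in> V \<Longrightarrow> y \<in> V \<Longrightarrow> card (nb (uv x y)) \<ge> 3"
  by (rule card3[of "pv (2*n+2)" _ "Inl x" "wv x y"]) (auto simp: nb_def E_simps)
lemma deg_w: "x \<in> V \<Longrightarrow> y \<in> V \<Longrightarrow> card (nb (wv x y)) \<ge> 3"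
  by (rule card3[of "pv (2*n+4)" _ "Inl y" "uv x y"]) (auto simp: nb_def E_simps)

lemma nb_p0: "nb (pv 0) = {pv 1}"
proof -
  { fix w assume "w \<in> nb (pv 0)"
    hence "w \<in> Wset" "(pv 0, w) \<in> EE" using nb_sub by (auto simp: nb_def)
    hence "w = pv 1" by (cases rule: W_cases) (auto simp: E_simps LL_def) }
  moreover have "pv 1 \<in> nb (pv 0)" by (auto simp: nb_def E_simps LL_def)
  ultimately show ?thesis by blast
qed

lemma nb_odd: assumes "odd k" "k < LL" shows "nb (pv k) = {pv (k-1), pv (k+1)}"
proof -
  { fix w assume "w \<in> nb (pv k)"
    hence "w \<in> Wset" "(pv k, w) \<in> EE" using nb_sub by (auto simp: nb_def)
    hence "w = pv (k-1) \<or> w = pv (k+1)" using assms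
      by (cases rule: W_cases) (auto simp: E_simps LL_def) }
  moreover have "pv (k-1) \<in> nb (pv k)" "pv (k+1) \<in> nb (pv k)" using assms
    by (auto simp: nb_def E_simps LL_def elim: oddE)
  ultimately show ?thesis by blast
qed

lemma deg_odd: "odd k \<Longrightarrow> k < LL \<Longrightarrow> card (nb (pv k)) = 2"
  by (simp add: nb_odd)

lemma deg1:
  assumes "V \<noteq> {}" "v \<in> Wset" "card (nb v) = 1" shows "v = pv 0"
proof -
  obtain x0 where x0: "x0 \<in> V" using assms by auto
  from assms(2) show ?thesis
  proof (cases rule: W_cases)
    case (l x) then show ?thesis using deg_l assms by fastforce
  next
    case (u x y) then show ?thesis using deg_u assms by fastforce
  next
    case (w x y) then show ?thesis using deg_w assms by fastforce
  next
    case (p k)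
    show ?thesis
    proof (rule ccontr)
      assume "v \<noteq> pv 0"
      hence k: "k > 0" using p by auto
      have "card (nb v) \<ge> 2"
      proof (cases "k = LL")
        case True
        show ?thesis by (rule card2[of "pv (k-1)" _ "Inl x0"]) (use p k True x0 in \<open>auto simp: nb_def E_simps\<close>)
      next
        case False
        show ?thesis by (rule card2[of "pv (k-1)" _ "pv (k+1)"]) (use p k False in \<open>auto simp: nb_def E_simps\<close>)
      qed
      thus False using assms by simp
    qed
  qed
qed

lemma step_nb:
  assumes "k < LL" "w \<in> nb (pv k)" "card (nb w) = card (nb (pv (Suc k)))"
  shows "w = pv (Suc k) \<or> (0 < k \<and> w = pv (k-1))"
proof -
  have w: "w \<in> Wset" "(pv k, w) \<in> EE" using assms nb_sub by (auto simp: nb_def)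
  from w(1) show ?thesis
  proof (cases rule: W_cases)
    case (l x) then show ?thesis using w assms by (auto simp: E_simps)
  next
    case (p j) then show ?thesis using w assms by (auto simp: E_simps)
  next
    case (u x y)
    hence "even k" using w by (auto simp: E_simps)
    hence "card (nb (pv (Suc k))) = 2" using assms by (intro deg_odd) (simp_all add: LL_def, presburger)
    then show ?thesis using deg_u u assms by fastforce
  next
    case (w x y)
    hence "even k" using \<open>(pv k, _) \<in> EE\<close> by (auto simp: E_simps)
    hence "card (nb (pv (Suc k))) = 2" using assms by (intro deg_odd) (simp_all add: LL_def, presburger)
    then show ?thesis using deg_w w assms by fastforce
  qed
qed

lemma aut_perm: "t \<in> graph_aut Wset EE \<Longrightarrow> t permutes Wset"
  by (simp add: graph_aut_def)

lemma aut_edge: "t \<in> graph_aut Wset EE \<Longrightarrow> (a,b) \<in> EE \<Longrightarrow> (t a, t b) \<in> EE"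
  using E_sub by (auto simp: graph_aut_def)

lemma aut_inj: assumes "t \<in> graph_aut Wset EE" shows "t a = t b \<longleftrightarrow> a = b"
  using permutes_inj[OF aut_perm[OF assms]] by (simp add: inj_eq)

lemma aut_nb: assumes "t \<in> graph_aut Wset EE" "v \<in> Wset" shows "nb (t v) = t ` nb v"
proof
  have p: "t permutes Wset" using assms aut_perm by blast
  show "t ` nb v \<subseteq> nb (t v)" using aut_edge[OF assms(1)] by (auto simp: nb_def)
  show "nb (t v) \<subseteq> t ` nb v"
  proof
    fix w assume "w \<in> nb (t v)"
    hence w: "w \<in> Wset" "(t v, w) \<in> EE" using nb_sub by (auto simp: nb_def)
    obtain u where u: "u \<in> Wset" "w = t u" using w(1) p permutes_image[OF p] by blast
    have "(v,u) \<in> EE" using w u assms by (auto simp: graph_aut_def)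
    thus "w \<in> t ` nb v" using u by (auto simp: nb_def)
  qed
qed

lemma aut_deg: assumes "t \<in> graph_aut Wset EE" "v \<in> Wset" shows "card (nb (t v)) = card (nb v)"
proof -
  have "inj_on t (nb v)" using permutes_inj[OF aut_perm[OF assms(1)]] by (auto intro: inj_on_subset)
  thus ?thesis using aut_nb[OF assms] by (simp add: card_image)
qed

lemma aut_W: "t \<in> graph_aut Wset EE \<Longrightarrow> v \<in> Wset \<Longrightarrow> t v \<in> Wset"
  by (rule permutes_in_image[OF aut_perm, THEN iffD2])

lemma aut_fix:
  assumes "V \<noteq> {}" "t \<in> graph_aut Wset EE"
  shows "k \<le> LL \<Longrightarrow> t (pv k) = pv k"
proof (induction k rule: less_induct)
  case (less k)
  show ?case
  proof (cases k)
    case 0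
    have "card (nb (t (pv 0))) = 1" using aut_deg[OF assms(2)] nb_p0 by simp
    then show ?thesis using deg1[OF assms(1)] aut_W[OF assms(2)] 0 by simp
  next
    case (Suc j)
    have IHj: "t (pv j) = pv j" using less Suc by simp
    have "pv k \<in> nb (pv j)" using Suc less by (simp add: nb_def E_simps)
    hence "t (pv k) \<in> t ` nb (pv j)" by blast
    hence m: "t (pv k) \<in> nb (pv j)" using aut_nb[OF assms(2), of "pv j"] IHj less Suc by simp
    have "card (nb (t (pv k))) = card (nb (pv (Suc j)))" using aut_deg[OF assms(2)] less Suc by simp
    from step_nb[OF _ m this] Suc less
    have "t (pv k) = pv k \<or> (0 < j \<and> t (pv k) = pv (j-1))" by simp
    moreover have "0 < j \<Longrightarrow> t (pv (j-1)) = pv (j-1)" using less Suc by simp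
    ultimately show ?thesis
    proof (elim disjE conjE)
      assume "0 < j" "t (pv k) = pv (j-1)"
      hence "t (pv k) = t (pv (j-1))" using \<open>0 < j \<Longrightarrow> _\<close> by simp
      hence "k = j - 1" using aut_inj[OF assms(2)] by simp
      thus ?thesis using Suc by simp
    qed
  qed
qed

lemma aut_pfix: "V \<noteq> {} \<Longrightarrow> t \<in> graph_aut Wset EE \<Longrightarrow> v \<in> Wset \<Longrightarrow> t v = pv k \<Longrightarrow> k \<le> LL \<Longrightarrow> v = pv k"
  using aut_fix aut_inj by metis

lemma aut_l:
  assumes "V \<noteq> {}" "t \<in> graph_aut Wset EE" "x \<in> V"
  shows "\<exists>z\<in>V. t (Inl x) = Inl z"
proof -
  have "(pv LL, Inl x) \<in> EE" using assms by (simp add: E_simps)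
  hence e: "(pv LL, t (Inl x)) \<in> EE" using aut_edge[OF assms(2)] aut_fix[OF assms(1,2)] by fastforce
  have "t (Inl x) \<in> Wset" using aut_W[OF assms(2)] assms by simp
  thus ?thesis
  proof (cases rule: W_cases)
    case (p k) thus ?thesis using aut_pfix[OF assms(1,2), of "Inl x" k] assms by simp
  next
    case (u a b) thus ?thesis using e by (auto simp: E_simps LL_def)
  next
    case (w a b) thus ?thesis using e by (auto simp: E_simps LL_def)
  qed auto
qed

lemma aut_u:
  assumes "V \<noteq> {}" "t \<in> graph_aut Wset EE" "x \<in> V" "y \<in> V"
  shows "\<exists>a\<in>V. \<exists>b\<in>V. t (uv x y) = uv a b"
proof -
  have "(pv (2*n+2), uv x y) \<in> EE" using assms by (simp add: E_simps)
  hence e: "(pv (2*n+2), t (uv x y)) \<in> EE" using aut_edge[OF assms(2)] aut_fix[OF assms(1,2)] by (fastforce simp: LL_def)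
  have "t (uv x y) \<in> Wset" using aut_W[OF assms(2)] assms by simp
  thus ?thesis
  proof (cases rule: W_cases)
    case (p k) thus ?thesis using aut_pfix[OF assms(1,2), of "uv x y" k] assms by simp
  next
    case (l a) thus ?thesis using e by (auto simp: E_simps LL_def)
  next
    case (w a b) thus ?thesis using e by (auto simp: E_simps LL_def)
  qed auto
qed

lemma aut_w:
  assumes "V \<noteq> {}" "t \<in> graph_aut Wset EE" "x \<in> V" "y \<in> V"
  shows "\<exists>a\<in>V. \<exists>b\<in>V. t (wv x y) = wv a b"
proof -
  have "(pv (2*n+4), wv x y) \<in> EE" using assms by (simp add: E_simps)
  hence e: "(pv (2*n+4), t (wv x y)) \<in> EE" using aut_edge[OF assms(2)] aut_fix[OF assms(1,2)] by (fastforce simp: LL_def)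
  have "t (wv x y) \<in> Wset" using aut_W[OF assms(2)] assms by simp
  thus ?thesis
  proof (cases rule: W_cases)
    case (p k) thus ?thesis using aut_pfix[OF assms(1,2), of "wv x y" k] assms by simp
  next
    case (l a) thus ?thesis using e by (auto simp: E_simps LL_def)
  next
    case (u a b) thus ?thesis using e by (auto simp: E_simps LL_def)
  qed auto
qed

lemma aut_sig:
  assumes "V \<noteq> {}" "t \<in> graph_aut Wset EE" "x \<in> V"
  shows "t (Inl x) = Inl (restrict_Inl V t x)" "restrict_Inl V t x \<in> V"
  using aut_l[OF assms] assms(3) by (auto simp: restrict_Inl_def)

lemma aut_uvw:
  assumes "V \<noteq> {}" "t \<in> graph_aut Wset EE" "x \<in> V" "y \<in> V"
  shows "t (uv x y) = uv (restrict_Inl V t x) (restrict_Inl V t y) \<and>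
         t (wv x y) = wv (restrict_Inl V t x) (restrict_Inl V t y)"
proof -
  let ?s = "restrict_Inl V t"
  obtain a b where ab: "a \<in> V" "b \<in> V" "t (uv x y) = uv a b" using aut_u[OF assms] by blast
  obtain c d where cd: "c \<in> V" "d \<in> V" "t (wv x y) = wv c d" using aut_w[OF assms] by blast
  have sx: "t (Inl x) = Inl (?s x)" "?s x \<in> V" using aut_sig[OF assms(1,2,3)] by auto
  have sy: "t (Inl y) = Inl (?s y)" "?s y \<in> V" using aut_sig[OF assms(1,2,4)] by auto
  have "(t (Inl x), t (uv x y)) \<in> EE" using aut_edge[OF assms(2)] assms by (simp add: E_simps)
  hence 1: "a = ?s x" using sx ab by (simp add: E_simps)
  have "(t (Inl y), t (wv x y)) \<in> EE" using aut_edge[OF assms(2)] assms by (simp add: E_simps)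
  hence 2: "d = ?s y" using sy cd by (simp add: E_simps)
  have "(t (uv x y), t (wv x y)) \<in> EE" using aut_edge[OF assms(2)] assms by (simp add: E_simps)
  hence "a = c \<and> b = d" using ab cd by (simp add: E_simps)
  thus ?thesis using 1 2 ab cd by simp
qed

lemma A_iff: "i \<in> {1..n} \<Longrightarrow> x \<in> V \<Longrightarrow> y \<in> V \<Longrightarrow> (pv (2*i), uv x y) \<in> EE \<longleftrightarrow> (x,y) \<in> A i"
  by (auto simp: E_simps)

lemma aut_edge_iff: "t \<in> graph_aut Wset EE \<Longrightarrow> a \<in> Wset \<Longrightarrow> b \<in> Wset \<Longrightarrow> (a,b) \<in> EE \<longleftrightarrow> (t a, t b) \<in> EE"
  by (auto simp: graph_aut_def)

lemma aut_common:
  assumes "V \<noteq> {}" "t \<in> graph_aut Wset EE"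
  shows "restrict_Inl V t \<in> common_aut V n A"
proof -
  let ?s = "restrict_Inl V t"
  have sV: "?s x \<in> V" "t (Inl x) = Inl (?s x)" if "x \<in> V" for x using aut_sig[OF assms that] by auto
  have inj: "inj_on ?s V"
  proof (rule inj_onI)
    fix x y assume "x \<in> V" "y \<in> V" "?s x = ?s y"
    hence "t (Inl x) = t (Inl y)" using sV by simp
    thus "x = y" using aut_inj[OF assms(2)] by simp
  qed
  have "?s ` V = V" using endo_inj_surj[OF fin _ inj] sV by blast
  hence "bij_betw ?s V V" using inj by (simp add: bij_betw_def)
  hence perm: "?s permutes V" by (rule bij_imp_permutes) (simp add: restrict_Inl_def)
  have "?s \<in> graph_aut V (A i)" if i: "i \<in> {1..n}" for i
  proof -
    have "(x, y) \<in> A i \<longleftrightarrow> (?s x, ?s y) \<in> A i" if "x \<in> V" "y \<in> V" for x y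
    proof -
      have "(x, y) \<in> A i \<longleftrightarrow> (pv (2*i), uv x y) \<in> EE" using A_iff i that by simp
      also have "\<dots> \<longleftrightarrow> (t (pv (2*i)), t (uv x y)) \<in> EE"
        using aut_edge_iff[OF assms(2)] i that by (simp add: LL_def)
      also have "\<dots> \<longleftrightarrow> (pv (2*i), uv (?s x) (?s y)) \<in> EE"
        using aut_fix[OF assms, of "2*i"] aut_uvw[OF assms that] i by (simp add: LL_def)
      also have "\<dots> \<longleftrightarrow> (?s x, ?s y) \<in> A i" using A_iff i sV that by simp
      finally show ?thesis .
    qed
    thus ?thesis using perm by (simp add: graph_aut_def)
  qed
  thus ?thesis using perm by (simp add: common_aut_def)
qed

definition gg where "gg = inv_into V f"
definition px :: "'a + nat \<Rightarrow> 'a" where "px v = gg (fst (prod_decode (snd (prod_decode (projr v)))))"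
definition py :: "'a + nat \<Rightarrow> 'a" where "py v = gg (snd (prod_decode (snd (prod_decode (projr v)))))"

lemma pxy[simp]: "x \<in> V \<Longrightarrow> y \<in> V \<Longrightarrow> px (uv x y) = x \<and> py (uv x y) = y \<and> px (wv x y) = x \<and> py (wv x y) = y"
  using injf by (simp add: px_def py_def uv_def wv_def gg_def)

definition UU where "UU = (\<lambda>(x,y). uv x y) ` (V\<times>V)"
definition WW where "WW = (\<lambda>(x,y). wv x y) ` (V\<times>V)"

definition ext :: "('a \<Rightarrow> 'a) \<Rightarrow> 'a + nat \<Rightarrow> 'a + nat" where
  "ext s v = (if v \<in> Inl ` V then Inl (s (projl v))
     else if v \<in> UU then uv (s (px v)) (s (py v))
     else if v \<in> WW then wv (s (px v)) (s (py v)) else v)"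

lemma ext_simps[simp]:
  "x \<in> V \<Longrightarrow> ext s (Inl x) = Inl (s x)"
  "x \<in> V \<Longrightarrow> y \<in> V \<Longrightarrow> ext s (uv x y) = uv (s x) (s y)"
  "x \<in> V \<Longrightarrow> y \<in> V \<Longrightarrow> ext s (wv x y) = wv (s x) (s y)"
  "ext s (pv k) = pv k"
  by (auto simp: ext_def UU_def WW_def)

lemma ext_out: "v \<notin> Wset \<Longrightarrow> ext s v = v"
  by (auto simp: ext_def UU_def WW_def Wset_def)

lemma aut_ext:
  assumes "V \<noteq> {}" "t \<in> graph_aut Wset EE"
  shows "t = ext (restrict_Inl V t)"
proof
  fix v
  show "t v = ext (restrict_Inl V t) v"
  proof (cases "v \<in> Wset")
    case True thus ?thesis
    proof (cases rule: W_cases)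
      case (l x) thus ?thesis using aut_sig[OF assms] by simp
    next
      case (p k) thus ?thesis using aut_fix[OF assms] by simp
    next
      case (u x y) thus ?thesis using aut_uvw[OF assms] by simp
    next
      case (w x y) thus ?thesis using aut_uvw[OF assms] by simp
    qed
  next
    case False thus ?thesis using permutes_not_in[OF aut_perm[OF assms(2)]] ext_out by simp
  qed
qed


lemma ext_aut:
  assumes "s \<in> common_aut V n A"
  shows "ext s \<in> graph_aut Wset EE" "restrict_Inl V (ext s) = s"
proof -
  have perm: "s permutes V" using assms by (simp add: common_aut_def)
  have sV[simp]: "x \<in> V \<Longrightarrow> s x \<in> V" for x using permutes_in_image[OF perm] by simp
  have sinj[simp]: "x \<in> V \<Longrightarrow> y \<in> V \<Longrightarrow> s x = s y \<longleftrightarrow> x = y" for x y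
    using permutes_inj[OF perm] by (simp add: inj_eq)
  have hA[simp]: "i \<in> {1..n} \<Longrightarrow> x \<in> V \<Longrightarrow> y \<in> V \<Longrightarrow> (s x, s y) \<in> A i \<longleftrightarrow> (x,y) \<in> A i" for i x y
    using assms by (auto simp: common_aut_def graph_aut_def)
  have into: "ext s v \<in> Wset" if "v \<in> Wset" for v
    using that by (cases rule: W_cases) auto
  have inj: "inj_on (ext s) Wset"
  proof (rule inj_onI)
    fix a b assume a: "a \<in> Wset" and b: "b \<in> Wset" and e: "ext s a = ext s b"
    from a show "a = b"
      apply (cases rule: W_cases)
      apply (use b e in \<open>cases rule: W_cases\<close>; simp)+
      done
  qed
  have "ext s ` Wset = Wset" using endo_inj_surj[OF finW _ inj] into by blast
  hence "bij_betw (ext s) Wset Wset" using inj by (simp add: bij_betw_def)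
  hence p: "ext s permutes Wset" by (rule bij_imp_permutes) (rule ext_out)
  have pu: "(pv k, uv (s x) (s y)) \<in> EE \<longleftrightarrow> (pv k, uv x y) \<in> EE" if "x \<in> V" "y \<in> V" for k x y
  proof -
    have "(\<exists>i\<in>{1..n}. k = 2*i \<and> (s x, s y) \<in> A i) \<longleftrightarrow> (\<exists>i\<in>{1..n}. k = 2*i \<and> (x, y) \<in> A i)"
      using hA that by blast
    thus ?thesis using that by (simp add: E_pu)
  qed
  have up: "(uv (s x) (s y), pv k) \<in> EE \<longleftrightarrow> (uv x y, pv k) \<in> EE" if "x \<in> V" "y \<in> V" for k x y
    using pu[OF that] symE by blast
  have "(a,b) \<in> EE \<longleftrightarrow> (ext s a, ext s b) \<in> EE" if a: "a \<in> Wset" and b: "b \<in> Wset" for a b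
    apply (use a in \<open>cases rule: W_cases\<close>)
    apply (use b in \<open>cases rule: W_cases\<close>; simp add: pu up E_ll E_lu E_lw E_lp E_uu E_uw E_ww E_wp E_pp E_ul E_wl E_pl E_wu E_pw)+
    done
  thus "ext s \<in> graph_aut Wset EE" using p by (simp add: graph_aut_def)
  show "restrict_Inl V (ext s) = s"
    using permutes_not_in[OF perm] by (auto simp: restrict_Inl_def)
qed

lemma main_bij:
  assumes "V \<noteq> {}"
  shows "bij_betw (restrict_Inl V) (graph_aut Wset EE) (common_aut V n A)"
proof -
  have "inj_on (restrict_Inl V) (graph_aut Wset EE)"
  proof (rule inj_onI)
    fix a b assume ab: "a \<in> graph_aut Wset EE" "b \<in> graph_aut Wset EE" "restrict_Inl V a = restrict_Inl V b"
    have "a = ext (restrict_Inl V a)" by (rule aut_ext[OF assms ab(1)])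
    also have "\<dots> = ext (restrict_Inl V b)" using ab(3) by simp
    also have "\<dots> = b" by (rule aut_ext[OF assms ab(2), symmetric])
    finally show "a = b" .
  qed
  moreover have "restrict_Inl V ` graph_aut Wset EE = common_aut V n A"
  proof
    show "restrict_Inl V ` graph_aut Wset EE \<subseteq> common_aut V n A" using aut_common[OF assms] by blast
    show "common_aut V n A \<subseteq> restrict_Inl V ` graph_aut Wset EE"
    proof
      fix s assume s: "s \<in> common_aut V n A"
      show "s \<in> restrict_Inl V ` graph_aut Wset EE"
      proof (rule image_eqI[where x="ext s"])
        show "s = restrict_Inl V (ext s)" using ext_aut(2)[OF s] by simp
        show "ext s \<in> graph_aut Wset EE" by (rule ext_aut(1)[OF s])
      qed
    qed
  qed
  ultimately show ?thesis by (simp add: bij_betw_def)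
qed

lemma main_V:
  assumes "V \<noteq> {}" "t \<in> graph_aut Wset EE"
  shows "t ` (Inl ` V) = Inl ` V"
proof -
  have "t ` (Inl ` V) \<subseteq> Inl ` V" using aut_l[OF assms] by blast
  moreover have "inj_on t (Inl ` V)" using permutes_inj[OF aut_perm[OF assms(2)]] by (auto intro: inj_on_subset)
  moreover have "finite (Inl ` V)" using fin by simp
  ultimately show ?thesis by (intro endo_inj_surj)
qed

lemma main_und: "undirected_graph Wset EE"
  using E_sub E_irr by (auto simp: undirected_graph_def sym_def symE)

end

theorem proposition5p3:
  fixes V :: "'a set" and N n :: nat and A :: "nat \<Rightarrow> ('a \<times> 'a) set"
  assumes "finite V" and "card V = N"
    and "\<forall>i\<in>{1..n}. loopless_digraph V (A i) \<and> regular_digraph V (A i)"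
  shows "\<exists>(W :: ('a + nat) set) E.
           finite W \<and> Inl ` V \<subseteq> W \<and> undirected_graph W E \<and>
           (\<forall>\<tau>\<in>graph_aut W E. \<tau> ` (Inl ` V) = Inl ` V) \<and>
           bij_betw (restrict_Inl V) (graph_aut W E) (common_aut V n A)"
proof (cases "V = {}")
  case True
  have g: "graph_aut {} {} = {id}" by (auto simp: graph_aut_def)
  have c: "common_aut V n A = {id}" using True by (auto simp: common_aut_def graph_aut_def)
  have r: "restrict_Inl V id = id" using True by (auto simp: restrict_Inl_def)
  have "bij_betw (restrict_Inl V) (graph_aut {} {}) (common_aut V n A)"
    unfolding g c using r by (simp add: bij_betw_def)
  moreover have "undirected_graph {} {}" by (simp add: undirected_graph_def sym_def)
  ultimately show ?thesis using True by (intro exI[of _ "{}"]) auto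
next
  case False
  obtain f :: "'a \<Rightarrow> nat" and m where "f ` V = {i. i < m}" "inj_on f V"
    using finite_imp_inj_to_nat_seg[OF assms(1)] by blast
  interpret c: cons V n A f by unfold_locales (fact assms(1), fact)
  show ?thesis
  proof (intro exI conjI ballI)
    show "finite c.Wset" by (rule c.finW)
    show "Inl ` V \<subseteq> c.Wset" by auto
    show "undirected_graph c.Wset c.EE" by (rule c.main_und)
    show "\<tau> ` (Inl ` V) = Inl ` V" if "\<tau> \<in> graph_aut c.Wset c.EE" for \<tau> by (rule c.main_V[OF False that])
    show "bij_betw (restrict_Inl V) (graph_aut c.Wset c.EE) (common_aut V n A)" by (rule c.main_bij[OF False])
  qed
qed

end
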